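(* Let $I$ be a weakly primary ideal of a ring $R$, and suppose $(\sqrt{I})^n\subseteq I$ for some positive integer $n$. Then $I$ is a weakly $n$-absorbing ideal of $R$.
   Context: All rings are commutative with $1\neq0$. A proper ideal $I$ of $R$ is weakly primary if whenever $a,b\in R$ and $0\neq ab\in I$, then $a\in I$ or $b\in\sqrt{I}$. A proper ideal $I$ is weakly $n$-absorbing if whenever $0\neq a_1\cdots a_{n+1}\in I$ with $a_1,\dots,a_{n+1}\in R$, there are $n$ of the $a_i$'s whose product is in $I$. *)

theory Defs
  imports "HOL-Algebra.Algebra"
begin

definition radical :: "('a, 'b) ring_scheme \<Rightarrow> 'a set \<Rightarrow> 'a set" where
  "radical R I = {a \<in> carrier R. \<exists>k::nat. a [^]\<^bsub>R\<^esub> k \<in> I}"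

definition weakly_primary :: "('a, 'b) ring_scheme \<Rightarrow> 'a set \<Rightarrow> bool" where
  "weakly_primary R I \<longleftrightarrow> ideal I R \<and> I \<noteq> carrier R \<and>
     (\<forall>a\<in>carrier R. \<forall>b\<in>carrier R.
        a \<otimes>\<^bsub>R\<^esub> b \<noteq> \<zero>\<^bsub>R\<^esub> \<and> a \<otimes>\<^bsub>R\<^esub> b \<in> I \<longrightarrow> a \<in> I \<or> b \<in> radical R I)"

definition weakly_n_absorbing :: "('a, 'b) ring_scheme \<Rightarrow> nat \<Rightarrow> 'a set \<Rightarrow> bool" where
  "weakly_n_absorbing R n I \<longleftrightarrow> ideal I R \<and> I \<noteq> carrier R \<and>
     (\<forall>a \<in> {..n} \<rightarrow> carrier R.
        finprod R a {..n} \<noteq> \<zero>\<^bsub>R\<^esub> \<and> finprod R a {..n} \<in> I \<longrightarrow>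
        (\<exists>j\<in>{..n}. finprod R a ({..n} - {j}) \<in> I))"

end

theory Submission
  imports Defs
begin

lemma rad_pow_prod:
  fixes R (structure) and k :: nat
  assumes "cring R"
  shows "f \<in> {..<k} \<rightarrow> radical R I \<Longrightarrow>
     finprod R f {..<k} \<in> (radical R I) [^]\<^bsub>ideals_set R\<^esub> k"
proof (induction k)
  case 0
  interpret cring R by fact
  show ?case by (simp add: ideals_set_def)
next
  case (Suc k)
  interpret cring R by fact
  have rc: "radical R I \<subseteq> carrier R" unfolding radical_def by auto
  have fc: "f \<in> {..<k} \<rightarrow> carrier R" "f k \<in> carrier R" using Suc.prems rc by auto
  have ih: "finprod R f {..<k} \<in> (radical R I) [^]\<^bsub>ideals_set R\<^esub> k"
    using Suc.prems by (intro Suc.IH) auto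
  have "finprod R f {..<Suc k} = f k \<otimes> finprod R f {..<k}"
    using fc by (simp add: lessThan_Suc)
  also have "\<dots> = finprod R f {..<k} \<otimes> f k" using fc by (simp add: m_comm)
  finally have eq: "finprod R f {..<Suc k} = finprod R f {..<k} \<otimes> f k" .
  have "f k \<in> radical R I" using Suc.prems by auto
  then show ?case unfolding eq
    by (simp add: ideals_set_def ideal_prod.prod[OF ih[unfolded ideals_set_def]])
qed

theorem mainTheorem15:
  fixes R (structure) and I :: "'a set" and n :: nat
  assumes "cring R" and "\<one>\<^bsub>R\<^esub> \<noteq> \<zero>\<^bsub>R\<^esub>"
    and "weakly_primary R I"
    and "n > 0"
    and "(radical R I) [^]\<^bsub>ideals_set R\<^esub> n \<subseteq> I"
  shows "weakly_n_absorbing R n I"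
proof -
  interpret cring R by fact
  have wp: "ideal I R" "I \<noteq> carrier R"
    "\<And>a b. a \<in> carrier R \<Longrightarrow> b \<in> carrier R \<Longrightarrow> a \<otimes> b \<noteq> \<zero> \<Longrightarrow> a \<otimes> b \<in> I
       \<Longrightarrow> a \<in> I \<or> b \<in> radical R I"
    using assms(3) unfolding weakly_primary_def by auto
  show ?thesis unfolding weakly_n_absorbing_def
  proof (intro conjI wp ballI impI)
    fix a assume a: "a \<in> {..n} \<rightarrow> carrier R"
      and h: "finprod R a {..n} \<noteq> \<zero> \<and> finprod R a {..n} \<in> I"
    show "\<exists>j\<in>{..n}. finprod R a ({..n} - {j}) \<in> I"
    proof (cases "\<forall>i\<in>{..n}. a i \<in> radical R I")
      case True
      have "finprod R a {..<n} \<in> (radical R I) [^]\<^bsub>ideals_set R\<^esub> n"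
        using True by (intro rad_pow_prod[OF assms(1)]) auto
      moreover have e: "{..n} - {n} = {..<n}" by auto
      ultimately have "finprod R a ({..n} - {n}) \<in> I" using assms(5) unfolding e by blast
      then show ?thesis by blast
    next
      case False
      then obtain j where j: "j \<in> {..n}" "a j \<notin> radical R I" by auto
      have ins: "{..n} = insert j ({..n} - {j})" using j by auto
      have ac: "a \<in> ({..n} - {j}) \<rightarrow> carrier R" "a j \<in> carrier R" using a j by auto
      have "finprod R a {..n} = a j \<otimes> finprod R a ({..n} - {j})"
        using ac by (subst ins, subst finprod_insert) auto
      also have "\<dots> = finprod R a ({..n} - {j}) \<otimes> a j" using ac by (simp add: m_comm)
      finally have eq: "finprod R a {..n} = finprod R a ({..n} - {j}) \<otimes> a j" .
      have "finprod R a ({..n} - {j}) \<in> I \<or> a j \<in> radical R I"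
        using wp(3)[of "finprod R a ({..n} - {j})" "a j"] h ac eq by auto
      then show ?thesis using j by auto
    qed
  qed
qed

end
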